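(* Let $G=(V,E)$ and $G'=(V,E')$ be simple directed graphs on the same vertex set with the same underlying undirected graph, i.e. $\{\{u,v\} : (u,v)\in E\}=\{\{u,v\}:(u,v)\in E'\}$. Let $D:=(E'\setminus E)\cup(E\setminus E')$ and $N:=\mathrm{nbhd}(D)$. Then $$d\mathcal{F}l(G') = d\mathcal{F}l(G'[N]) \uplus \big(d\mathcal{F}l(G)\setminus d\mathcal{F}l(G[N])\big),$$ where $\uplus$ denotes a disjoint union.
   Context: A simple directed graph is a pair $G=(V,E)$ with $V$ finite and $E\subseteq (V\times V)\setminus\{(v,v):v\in V\}$; $(i,j)\in E$ is an edge from $i$ to $j$. For $W\subseteq V$, the induced subgraph $G[W]$ is $(W, E\cap (W\times W))$. A simplex of dimension $d$ in $G$ is a tuple $[v_0,\dots,v_d]$ of distinct vertices such that $(v_a,v_b)\in E$ for all $a<b$ (equivalently, a subgraph of a clique together with a total order on its vertices such that the chosen edges point from lower to higher vertices). The directed flag complex $d\mathcal{F}l(G)$ is the collection of all simplices of all dimensions $d\ge 0$ of $G$; a simplex of an induced subgraph $G[W]$ is regarded as a simplex of $G$. For an (ordered) pair $(i,j)$ of vertices joined by an edge in either direction, $\mathrm{nbhd}((i,j)) = \{i,j\}\cup\big((\mathrm{In}(i)\cup\mathrm{Out}(i))\cap(\mathrm{In}(j)\cup\mathrm{Out}(j))\big)$ where $\mathrm{In}(v)=\{u:(u,v)\in E\}$ and $\mathrm{Out}(v)=\{u:(v,u)\in E\}$ (this set is the same whether computed in $G$ or $G'$, since they have the same underlying undirected graph).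 For a set $D$ of such pairs, $\mathrm{nbhd}(D)=\bigcup_{e\in D}\mathrm{nbhd}(e)$. *)

theory Defs
  imports Main
begin

definition simple_digraph :: "'a set \<Rightarrow> ('a \<times> 'a) set \<Rightarrow> bool" where
  "simple_digraph V E \<longleftrightarrow> finite V \<and> E \<subseteq> (V \<times> V) - {(v, v) | v. v \<in> V}"

text \<open>Induced subgraph G[W] = (W, E \<inter> (W \<times> W)); we only record its edge set,
its vertex set being W.\<close>
definition induced_edges :: "('a \<times> 'a) set \<Rightarrow> 'a set \<Rightarrow> ('a \<times> 'a) set" where
  "induced_edges E W = E \<inter> (W \<times> W)"

text \<open>A simplex of dimension d = length - 1 \<ge> 0: a tuple of distinct vertices
with an edge from v_a to v_b whenever a < b.\<close>
definition is_simplex :: "'a set \<Rightarrow> ('a \<times> 'a) set \<Rightarrow> 'a list \<Rightarrow> bool" where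
  "is_simplex V E xs \<longleftrightarrow> xs \<noteq> [] \<and> set xs \<subseteq> V \<and> distinct xs \<and>
     (\<forall>a b. a < b \<and> b < length xs \<longrightarrow> (xs ! a, xs ! b) \<in> E)"

definition dFl :: "'a set \<Rightarrow> ('a \<times> 'a) set \<Rightarrow> 'a list set" where
  "dFl V E = {xs. is_simplex V E xs}"

definition In_nb :: "('a \<times> 'a) set \<Rightarrow> 'a \<Rightarrow> 'a set" where
  "In_nb E v = {u. (u, v) \<in> E}"

definition Out_nb :: "('a \<times> 'a) set \<Rightarrow> 'a \<Rightarrow> 'a set" where
  "Out_nb E v = {u. (v, u) \<in> E}"

definition nbhd :: "('a \<times> 'a) set \<Rightarrow> 'a \<times> 'a \<Rightarrow> 'a set" where
  "nbhd E e = (case e of (i, j) \<Rightarrow>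
     {i, j} \<union> ((In_nb E i \<union> Out_nb E i) \<inter> (In_nb E j \<union> Out_nb E j)))"

definition nbhd_set :: "('a \<times> 'a) set \<Rightarrow> ('a \<times> 'a) set \<Rightarrow> 'a set" where
  "nbhd_set E D = (\<Union>e\<in>D. nbhd E e)"

definition undirected_edges :: "('a \<times> 'a) set \<Rightarrow> 'a set set" where
  "undirected_edges E = {{u, v} | u v. (u, v) \<in> E}"

end

theory Submission
  imports Defs
begin

lemma adj_sym:
  assumes "undirected_edges E = undirected_edges E'" "(x,y) \<in> E'"
  shows "(x,y) \<in> E \<or> (y,x) \<in> E"
proof -
  have "{x,y} \<in> undirected_edges E" using assms unfolding undirected_edges_def by blast
  then obtain u v where "{x,y} = {u,v}" "(u,v) \<in> E" unfolding undirected_edges_def by blast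
  then show ?thesis by (metis doubleton_eq_iff)
qed

lemma adjF:
  assumes "\<forall>x y. (x,y) \<in> F \<longrightarrow> (x,y) \<in> E \<or> (y,x) \<in> E"
    and "is_simplex V F xs" and "c < length xs" and "a < length xs" and "c \<noteq> a"
  shows "xs ! c \<in> In_nb E (xs ! a) \<union> Out_nb E (xs ! a)"
proof (cases "c < a")
  case True
  then have "(xs!c, xs!a) \<in> F" using assms unfolding is_simplex_def by blast
  then show ?thesis using assms(1) unfolding In_nb_def Out_nb_def by blast
next
  case False
  then have "a < c" using assms by linarith
  then have "(xs!a, xs!c) \<in> F" using assms unfolding is_simplex_def by blast
  then show ?thesis using assms(1) unfolding In_nb_def Out_nb_def by blast
qed

lemma in_nbhd:
  assumes "\<forall>x y. (x,y) \<in> F \<longrightarrow> (x,y) \<in> E \<or> (y,x) \<in> E"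
    and "is_simplex V F xs" and "a < b" "b < length xs"
  shows "set xs \<subseteq> nbhd E (xs!a, xs!b)"
proof
  fix z assume "z \<in> set xs"
  then obtain c where c: "c < length xs" "z = xs ! c" by (metis in_set_conv_nth)
  show "z \<in> nbhd E (xs!a, xs!b)"
  proof (cases "c = a \<or> c = b")
    case True then show ?thesis using c unfolding nbhd_def by auto
  next
    case False
    have "z \<in> In_nb E (xs ! a) \<union> Out_nb E (xs ! a)"
      using adjF[OF assms(1,2) c(1), of a] False assms(3,4) c by auto
    moreover have "z \<in> In_nb E (xs ! b) \<union> Out_nb E (xs ! b)"
      using adjF[OF assms(1,2) c(1), of b] False assms(3,4) c by auto
    ultimately show ?thesis unfolding nbhd_def by auto
  qed
qed

theorem lemma2p9:
  fixes V :: "'a set" and E E' :: "('a \<times> 'a) set"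
  assumes "simple_digraph V E" and "simple_digraph V E'"
    and "undirected_edges E = undirected_edges E'"
  defines "D \<equiv> (E' - E) \<union> (E - E')"
  defines "N \<equiv> nbhd_set E D"
  shows "dFl V E' = dFl N (induced_edges E' N) \<union> (dFl V E - dFl N (induced_edges E N))
     \<and> dFl N (induced_edges E' N) \<inter> (dFl V E - dFl N (induced_edges E N)) = {}"
proof -
  have EV: "E \<subseteq> V \<times> V" "E' \<subseteq> V \<times> V" using assms(1,2) unfolding simple_digraph_def by auto
  have FE: "\<forall>x y. (x,y) \<in> E' \<longrightarrow> (x,y) \<in> E \<or> (y,x) \<in> E" using adj_sym[OF assms(3)] by blast
  have FE2: "\<forall>x y. (x,y) \<in> E \<longrightarrow> (x,y) \<in> E \<or> (y,x) \<in> E" by blast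
  have NV: "N \<subseteq> V"
  proof
    fix z assume "z \<in> N"
    then obtain i j where ij: "(i,j) \<in> D" "z \<in> nbhd E (i,j)" unfolding N_def nbhd_set_def by auto
    have "i \<in> V" "j \<in> V" using ij(1) EV unfolding D_def by auto
    then show "z \<in> V" using ij(2) EV unfolding nbhd_def In_nb_def Out_nb_def by auto
  qed
  have key: "set xs \<subseteq> N" if F: "\<forall>x y. (x,y) \<in> F \<longrightarrow> (x,y) \<in> E \<or> (y,x) \<in> E"
    and s: "is_simplex V F xs" and ab: "a < b" "b < length xs" "(xs!a, xs!b) \<in> D" for F xs a b
  proof -
    have "set xs \<subseteq> nbhd E (xs!a, xs!b)" using in_nbhd[OF F s ab(1,2)] .
    then show ?thesis using ab(3) unfolding N_def nbhd_set_def by blast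
  qed
  have sub: "is_simplex N (induced_edges F N) xs \<longleftrightarrow> is_simplex V F xs \<and> set xs \<subseteq> N" for F xs
    using NV unfolding is_simplex_def induced_edges_def
    by (auto simp: in_set_conv_nth) (meson nth_mem order.strict_trans subsetD)+
  have noD: "\<And>a b. a < b \<Longrightarrow> b < length xs \<Longrightarrow> (xs!a, xs!b) \<notin> D"
    if "\<forall>x y. (x,y) \<in> F \<longrightarrow> (x,y) \<in> E \<or> (y,x) \<in> E" "is_simplex V F xs" "\<not> set xs \<subseteq> N" for F xs
    using key that by blast
  have A: "is_simplex V E' xs \<longleftrightarrow> is_simplex V E xs" if "\<not> set xs \<subseteq> N" for xs
  proof
    assume s: "is_simplex V E' xs"
    then show "is_simplex V E xs" using noD[OF FE s that] unfolding is_simplex_def D_def by blast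
  next
    assume s: "is_simplex V E xs"
    then show "is_simplex V E' xs" using noD[OF FE2 s that] unfolding is_simplex_def D_def by blast
  qed
  show ?thesis
    unfolding dFl_def using sub A by auto
qed

end
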